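(* Let $G$ be a finite abelian group with $|G|\ge4$, $\sigma$ an automorphism of $G$ of order two, and $S$ a symmetric subset of $G$ of size $d$. Let $X$ be one of the Cayley sum graph $C_\Sigma(G,S)$, the twisted Cayley graph $C(G,S)^\sigma$, or the twisted Cayley sum graph $C_\Sigma(G,S)^\sigma$, and suppose $X$ is undirected. Then the diameter of $X$ is at least $\frac{|S|}{4e}|G|^{1/|S|}-\frac12|S|$.
   Context: $C_\Sigma(G,S)$ has vertex set $G$ and an edge from $x$ to $x^{-1}s$ for each $s\in S$; $C(G,S)^\sigma$ has an edge from $x$ to $\sigma(xs)$; $C_\Sigma(G,S)^\sigma$ has an edge from $x$ to $\sigma(x^{-1}s)$. A graph is undirected if its adjacency matrix is symmetric. The diameter is the supremum over pairs of vertices of the length of a shortest path between them (infinite if the graph is disconnected). *)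

theory Defs
  imports Complex_Main "HOL-Library.Extended_Real" "HOL-Library.Cardinality"
begin

text \<open>The finite abelian group G is a finite type of class ab_group_add (written additively),
 so x^{-1} s becomes (- x + s).\<close>

datatype graph_kind = CayleySum | TwistedCayley | TwistedCayleySum

fun nbr :: "graph_kind \<Rightarrow> ('a::ab_group_add \<Rightarrow> 'a) \<Rightarrow> 'a \<Rightarrow> 'a \<Rightarrow> 'a" where
  "nbr CayleySum \<sigma> x s = - x + s"
| "nbr TwistedCayley \<sigma> x s = \<sigma> (x + s)"
| "nbr TwistedCayleySum \<sigma> x s = \<sigma> (- x + s)"

definition adj :: "graph_kind \<Rightarrow> ('a::ab_group_add \<Rightarrow> 'a) \<Rightarrow> 'a set \<Rightarrow> 'a \<Rightarrow> 'a \<Rightarrow> nat" where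
  "adj k \<sigma> S x y = card {s \<in> S. nbr k \<sigma> x s = y}"

definition undirected :: "graph_kind \<Rightarrow> ('a::ab_group_add \<Rightarrow> 'a) \<Rightarrow> 'a set \<Rightarrow> bool" where
  "undirected k \<sigma> S \<longleftrightarrow> (\<forall>x y. adj k \<sigma> S x y = adj k \<sigma> S y x)"

definition edges :: "graph_kind \<Rightarrow> ('a::ab_group_add \<Rightarrow> 'a) \<Rightarrow> 'a set \<Rightarrow> ('a \<times> 'a) set" where
  "edges k \<sigma> S = {(x, y). \<exists>s\<in>S. y = nbr k \<sigma> x s}"

definition graph_dist :: "('a \<times> 'a) set \<Rightarrow> 'a \<Rightarrow> 'a \<Rightarrow> enat" where
  "graph_dist E x y = Inf {enat n | n. (x, y) \<in> E ^^ n}"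

definition diameter :: "('a \<times> 'a) set \<Rightarrow> enat" where
  "diameter E = (SUP x. SUP y. graph_dist E x y)"

definition group_automorphism :: "('a::ab_group_add \<Rightarrow> 'a) \<Rightarrow> bool" where
  "group_automorphism \<sigma> \<longleftrightarrow> bij \<sigma> \<and> (\<forall>x y. \<sigma> (x + y) = \<sigma> x + \<sigma> y)"

end

theory Submission imports Defs "HOL-Library.Multiset" begin

lemma exp_ge_pow_fact: fixes x::real assumes "x \<ge> 0" shows "x^n / fact n \<le> exp x"
proof -
  have s: "(\<lambda>i. x^i /\<^sub>R fact i) sums exp x" by (rule exp_converges)
  have "(\<Sum>i\<in>{n}. x^i /\<^sub>R fact i) \<le> suminf (\<lambda>i. x^i /\<^sub>R fact i)"
    by (rule sum_le_suminf) (use s assms in \<open>auto simp: sums_iff\<close>)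
  then show ?thesis using s by (simp add: sums_iff divide_inverse mult.commute)
qed

lemma final_ineq:
  fixes N D d :: nat
  assumes d: "d \<ge> 1" and N: "real N \<le> 2 * real ((D + d) choose d)" and Npos: "N > 0"
  shows "real d / (4 * exp 1) * real N powr (1 / real d) - real d / 2 \<le> real D"
proof -
  have f: "fact d \<ge> (real d / exp 1) ^ d"
  proof -
    have "real d ^ d / fact d \<le> exp (real d)" by (rule exp_ge_pow_fact) simp
    also have "exp (real d) = exp 1 ^ d" by (simp add: exp_of_nat_mult[symmetric])
    finally show ?thesis by (simp add: power_divide field_simps)
  qed
  have "real ((D + d) choose d) * fact d \<le> real (D+d) ^ d"
    using binomial_fact_pow[of "D+d" d] by (metis of_nat_fact of_nat_le_iff of_nat_mult of_nat_power)
  have b: "real ((D + d) choose d) \<le> (exp 1 * real (D+d) / real d) ^ d"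
  proof -
    have "real ((D + d) choose d) * (real d / exp 1) ^ d \<le> real ((D + d) choose d) * fact d"
      using f by (intro mult_left_mono) auto
    also have "\<dots> \<le> real (D+d) ^ d"
      using binomial_fact_pow[of "D+d" d] by (metis of_nat_fact of_nat_le_iff of_nat_mult of_nat_power)
    finally have "real ((D + d) choose d) * (real d / exp 1) ^ d \<le> real (D+d) ^ d" .
    moreover have "(real d / exp 1) ^ d > 0" using d by simp
    ultimately have "real ((D + d) choose d) \<le> real (D+d) ^ d / (real d / exp 1) ^ d"
      by (simp add: field_simps)
    also have "\<dots> = (exp 1 * real (D+d) / real d) ^ d" by (simp add: power_divide power_mult_distrib)
    finally show ?thesis .
  qed
  define B where "B = exp 1 * real (D+d) / real d"
  have Bpos: "B > 0" unfolding B_def using d by simp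
  have "real N \<le> 2 * B ^ d" using N b unfolding B_def[symmetric] by linarith
  hence "real N powr (1 / real d) \<le> (2 * B ^ d) powr (1 / real d)"
    by (intro powr_mono2) auto
  also have "\<dots> = 2 powr (1 / real d) * (B ^ d) powr (1/real d)"
    using Bpos by (simp add: powr_mult)
  also have "(B ^ d) powr (1/real d) = B"
    using Bpos d by (simp add: powr_realpow[symmetric] powr_powr)
  also have "2 powr (1 / real d) \<le> 2 powr 1"
    using d by (intro powr_mono) auto
  hence "2 powr (1 / real d) * B \<le> 2 * B" using Bpos by simp
  finally have "real N powr (1 / real d) \<le> 2 * B" using Bpos by simp
  hence "real d / (4 * exp 1) * real N powr (1 / real d) \<le> real d / (4 * exp 1) * (2 * B)"
    by (intro mult_left_mono) auto
  also have "\<dots> = real (D + d) / 2" unfolding B_def using d by (simp add: field_simps)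
  finally show ?thesis by simp
qed

definition tau :: "graph_kind \<Rightarrow> ('a::ab_group_add \<Rightarrow> 'a) \<Rightarrow> 'a \<Rightarrow> 'a" where
  "tau k \<sigma> = (case k of CayleySum \<Rightarrow> uminus | TwistedCayley \<Rightarrow> \<sigma> | TwistedCayleySum \<Rightarrow> (\<lambda>x. - \<sigma> x))"
definition psi :: "graph_kind \<Rightarrow> ('a::ab_group_add \<Rightarrow> 'a) \<Rightarrow> 'a \<Rightarrow> 'a" where
  "psi k \<sigma> = (case k of CayleySum \<Rightarrow> id | _ \<Rightarrow> \<sigma>)"

lemma add_hom_basic:
  fixes \<sigma> :: "'a::ab_group_add \<Rightarrow> 'a"
  assumes "\<forall>x y. \<sigma> (x + y) = \<sigma> x + \<sigma> y"
  shows "\<sigma> 0 = 0" "\<sigma> (- x) = - \<sigma> x"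
proof -
  have "\<sigma> 0 = \<sigma> 0 + \<sigma> 0" using assms by (metis add_0)
  thus z: "\<sigma> 0 = 0" by simp
  have "\<sigma> (- x) + \<sigma> x = 0" using assms z by (metis add.left_inverse)
  thus "\<sigma> (- x) = - \<sigma> x" by (simp add: eq_neg_iff_add_eq_0)
qed

lemma nbr_eq:
  assumes "\<forall>x y. \<sigma> (x + y) = \<sigma> x + \<sigma> y"
  shows "nbr k \<sigma> z s = tau k \<sigma> z + psi k \<sigma> s"
proof -
  have "\<sigma> (-z+s) = \<sigma> (-z) + \<sigma> s" using assms by blast
  then show ?thesis using assms add_hom_basic[OF assms] by (cases k) (auto simp: tau_def psi_def)
qed

lemma tau_add:
  assumes "\<forall>x y. \<sigma> (x + y) = \<sigma> x + \<sigma> y"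
  shows "tau k \<sigma> (a + b) = tau k \<sigma> a + tau k \<sigma> b"
  using assms by (cases k) (auto simp: tau_def)

lemma tau_zero:
  assumes "\<forall>x y. \<sigma> (x + y) = \<sigma> x + \<sigma> y"
  shows "tau k \<sigma> 0 = 0"
  using assms add_hom_basic[OF assms] by (cases k) (auto simp: tau_def)

lemma tau_inv:
  assumes "\<forall>x y. \<sigma> (x + y) = \<sigma> x + \<sigma> y" "\<sigma> \<circ> \<sigma> = id"
  shows "tau k \<sigma> (tau k \<sigma> a) = a"
proof -
  have "\<sigma> (\<sigma> a) = a" using assms(2) by (metis comp_apply id_apply)
  thus ?thesis using add_hom_basic[OF assms(1)] by (cases k) (auto simp: tau_def)
qed

lemma sum_mset_tau:
  assumes "\<forall>x y. \<sigma> (x + y) = \<sigma> x + \<sigma> y"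
  shows "sum_mset (image_mset (tau k \<sigma>) M) = tau k \<sigma> (sum_mset M)"
  by (induction M) (auto simp: tau_add[OF assms] tau_zero[OF assms])

lemma sigma_S:
  fixes \<sigma> :: "'a::{ab_group_add,finite} \<Rightarrow> 'a"
  assumes add: "\<forall>x y. \<sigma> (x + y) = \<sigma> x + \<sigma> y" and inj: "inj \<sigma>"
    and sym: "uminus ` S = S" and und: "undirected k \<sigma> S" and k: "k \<noteq> CayleySum"
    and s: "s \<in> S"
  shows "\<sigma> s \<in> S"
proof -
  have z: "\<sigma> 0 = 0" using add_hom_basic[OF add] by simp
  have "s \<in> {t \<in> S. nbr k \<sigma> 0 t = \<sigma> s}" using s k by (cases k) auto
  hence "adj k \<sigma> S 0 (\<sigma> s) > 0"
    unfolding adj_def by (metis card_gt_0_iff empty_iff finite)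
  hence "adj k \<sigma> S (\<sigma> s) 0 > 0" using und unfolding undirected_def by metis
  hence "\<exists>t\<in>S. nbr k \<sigma> (\<sigma> s) t = 0"
    by (rule contrapos_pp) (simp add: adj_def)
  then obtain t where t: "t \<in> S" "nbr k \<sigma> (\<sigma> s) t = 0" by blast
  show ?thesis
  proof (cases k)
    case TwistedCayley
    hence "\<sigma> (\<sigma> s + t) = \<sigma> 0" using t z by simp
    hence "\<sigma> s + t = 0" using inj by (meson injD)
    hence "- t = \<sigma> s" by (metis add_eq_0_iff2 minus_minus)
    thus ?thesis using sym t by force
  next
    case TwistedCayleySum
    hence "\<sigma> (- \<sigma> s + t) = \<sigma> 0" using t z by simp
    hence "- \<sigma> s + t = 0" using inj by (meson injD)
    hence "t = \<sigma> s" by (metis add_eq_0_iff2 minus_minus add.commute)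
    thus ?thesis using t by simp
  qed (use k in simp)
qed
lemma tau_S:
  fixes \<sigma> :: "'a::{ab_group_add,finite} \<Rightarrow> 'a"
  assumes add: "\<forall>x y. \<sigma> (x + y) = \<sigma> x + \<sigma> y" and inj: "inj \<sigma>"
    and sym: "uminus ` S = S" and und: "undirected k \<sigma> S" and s: "s \<in> S"
  shows "tau k \<sigma> s \<in> S" "psi k \<sigma> s \<in> S"
proof -
  have m: "- x \<in> S" if "x \<in> S" for x using sym that by force
  show "tau k \<sigma> s \<in> S"
    using sigma_S[OF add inj sym und _ s] m s by (cases k) (auto simp: tau_def)
  show "psi k \<sigma> s \<in> S"
    using sigma_S[OF add inj sym und _ s] m s by (cases k) (auto simp: psi_def)
qed

lemma walk_form:
  fixes \<sigma> :: "'a::{ab_group_add,finite} \<Rightarrow> 'a"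
  assumes add: "\<forall>x y. \<sigma> (x + y) = \<sigma> x + \<sigma> y" and inj: "inj \<sigma>" and inv: "\<sigma> \<circ> \<sigma> = id"
    and sym: "uminus ` S = S" and und: "undirected k \<sigma> S"
  shows "(x0, y) \<in> edges k \<sigma> S ^^ n \<Longrightarrow>
    \<exists>t\<in>{x0, tau k \<sigma> x0}. \<exists>M\<in>multisets_of_size S n. y = t + sum_mset M"
proof (induction n arbitrary: y)
  case 0
  then show ?case by (auto intro!: bexI[of _ "{#}"])
next
  case (Suc n)
  from Suc.prems obtain z where z: "(x0, z) \<in> edges k \<sigma> S ^^ n" "(z, y) \<in> edges k \<sigma> S"
    by (auto elim: relpow_Suc_E)
  from Suc.IH[OF z(1)] obtain t M where tM: "t \<in> {x0, tau k \<sigma> x0}" "M \<in> multisets_of_size S n"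
    "z = t + sum_mset M" by blast
  from z(2) obtain s where s: "s \<in> S" "y = nbr k \<sigma> z s" unfolding edges_def by auto
  define M' where "M' = add_mset (psi k \<sigma> s) (image_mset (tau k \<sigma>) M)"
  have "y = tau k \<sigma> t + sum_mset M'"
    unfolding M'_def using s tM by (simp add: nbr_eq[OF add] tau_add[OF add] sum_mset_tau[OF add] algebra_simps)
  moreover have "tau k \<sigma> t \<in> {x0, tau k \<sigma> x0}" using tM(1) tau_inv[OF add inv] by auto
  moreover have "M' \<in> multisets_of_size S (Suc n)"
    using tM(2) tau_S[OF add inj sym und] s(1) unfolding M'_def multisets_of_size_def by auto
  ultimately show ?case by blast
qed


lemma dist_le_D:
  assumes "graph_dist E x y \<le> enat D"
  shows "\<exists>n\<le>D. (x, y) \<in> E ^^ n"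
proof -
  define A where "A = {enat n | n. (x, y) \<in> E ^^ n}"
  have "A \<noteq> {}"
  proof
    assume "A = {}"
    hence "graph_dist E x y = \<infinity>" unfolding graph_dist_def A_def[symmetric] by (simp add: top_enat_def)
    thus False using assms by simp
  qed
  hence "Inf A \<in> A" unfolding Inf_enat_def by (auto intro: LeastI)
  then obtain n where n: "Inf A = enat n" "(x, y) \<in> E ^^ n" unfolding A_def by auto
  have "enat n \<le> enat D" using assms n unfolding graph_dist_def A_def[symmetric] by simp
  thus ?thesis using n by auto
qed

lemma dist_le_diam: "graph_dist E x y \<le> diameter E"
  unfolding diameter_def by (meson SUP_upper UNIV_I order_trans)

theorem theorem9p1:
  fixes \<sigma> :: "'a::{ab_group_add, finite} \<Rightarrow> 'a" and S :: "'a set" and k :: graph_kind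
  assumes "CARD('a) \<ge> 4"
    and "group_automorphism \<sigma>" and "\<sigma> \<circ> \<sigma> = id" and "\<sigma> \<noteq> id"
    and "uminus ` S = S"
    and "undirected k \<sigma> S"
  shows "ereal (real (card S) / (4 * exp 1) * real CARD('a) powr (1 / real (card S))
                - real (card S) / 2)
         \<le> ereal_of_enat (diameter (edges k \<sigma> S))"
proof (cases "card S = 0")
  case True
  have "0 \<le> ereal_of_enat (diameter (edges k \<sigma> S))" by (simp only: ereal_of_enat_ge_zero_cancel_iff) simp
  then show ?thesis using True by (simp add: zero_ereal_def)
next
  case False
  hence d1: "card S \<ge> 1" by linarith
  have add: "\<forall>x y. \<sigma> (x + y) = \<sigma> x + \<sigma> y" and inj: "inj \<sigma>"
    using assms(2) unfolding group_automorphism_def bij_def by auto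
  show ?thesis
  proof (cases "diameter (edges k \<sigma> S)")
    case infinity
    then show ?thesis by simp
  next
    case (enat D)
    define x0 :: 'a where "x0 = 0"
    define f where "f = (\<lambda>(t::'a, M::'a multiset). t + sum_mset M)"
    define MS where "MS = (\<Union>n\<le>D. multisets_of_size S n)"
    have cov: "UNIV \<subseteq> f ` ({x0, tau k \<sigma> x0} \<times> MS)"
    proof
      fix y :: 'a
      have "graph_dist (edges k \<sigma> S) x0 y \<le> diameter (edges k \<sigma> S)" by (rule dist_le_diam)
      hence gd: "graph_dist (edges k \<sigma> S) x0 y \<le> enat D" using enat by simp
      obtain n where n: "n \<le> D" "(x0, y) \<in> edges k \<sigma> S ^^ n" using dist_le_D[OF gd] by blast
      from walk_form[OF add inj assms(3) assms(5) assms(6) n(2)]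
      obtain t M where "t \<in> {x0, tau k \<sigma> x0}" "M \<in> multisets_of_size S n" "y = t + sum_mset M"
        by blast
      note tM = this
      have "(t, M) \<in> {x0, tau k \<sigma> x0} \<times> MS" unfolding MS_def using tM(1,2) n(1) by blast
      moreover have "y = f (t, M)" unfolding f_def using tM(3) by simp
      ultimately show "y \<in> f ` ({x0, tau k \<sigma> x0} \<times> MS)" by (rule rev_image_eqI)
    qed
    have fin: "finite S" by simp
    have finMS: "finite MS" unfolding MS_def using fin by (intro finite_UN_I) auto
    have "f ` ({x0, tau k \<sigma> x0} \<times> MS) = UNIV" using cov by blast
    hence "CARD('a) \<le> card (f ` ({x0, tau k \<sigma> x0} \<times> MS))" by simp
    also have "\<dots> \<le> card ({x0, tau k \<sigma> x0} \<times> MS)" by (rule card_image_le) (simp add: finMS)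
    also have "\<dots> = card {x0, tau k \<sigma> x0} * card MS" by (rule card_cartesian_product)
    also have "\<dots> \<le> 2 * card MS" by (intro mult_right_mono) (cases "x0 = tau k \<sigma> x0", simp_all)
    finally have N0: "CARD('a) \<le> 2 * card MS" .
    have "card MS \<le> (\<Sum>n\<le>D. card (multisets_of_size S n))" unfolding MS_def by (rule card_UN_le) simp
    also have "\<dots> = (\<Sum>n\<le>D. (card S - 1 + n) choose n)"
      proof (intro sum.cong refl)
      fix n assume "n \<in> {..D}"
      have "card S + n - 1 = card S - 1 + n" using d1 by arith
      thus "card (multisets_of_size S n) = (card S - 1 + n) choose n"
        by (simp only: card_multisets_of_size[OF fin])
    qed
    also have "\<dots> = Suc (card S - 1 + D) choose D" by (rule sum_choose_lower)
    also have "\<dots> = (D + card S) choose card S"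
      using d1 binomial_symmetric[of D "D + card S"] by (simp add: add.commute)
    finally have "card MS \<le> (D + card S) choose card S" .
    hence N: "CARD('a) \<le> 2 * ((D + card S) choose card S)" using N0 by linarith
    have N': "real CARD('a) \<le> 2 * real ((D + card S) choose card S)" using N by (metis of_nat_le_iff of_nat_mult of_nat_numeral)
    have "real (card S) / (4 * exp 1) * real CARD('a) powr (1 / real (card S)) - real (card S) / 2 \<le> real D"
      by (rule final_ineq[OF d1 N']) simp
    then show ?thesis using enat by simp
  qed
qed
end
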